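(* Let $N$ be a smooth positive function on an open interval of positive $r$-values, let $a$ be a constant such that $F(r)=\int_a^r\frac{1}{N(\mu)}\,\mathrm{d}\mu$ is defined and has a smooth inverse $F^{-1}$ defined on an open interval $I$, and set $b_1(t)=N(F^{-1}(t))$, $b_2(t)=F^{-1}(t)$ for $t\in I$. Consider the $(2+1)$-dimensional Lorentzian multiply warped product $I\times{}_{b_1}F_1\times{}_{b_2}F_2$ with $F_1,F_2$ one-dimensional Riemannian manifolds with coordinates $x,\phi$ and metric $\mathrm{d}s^2=-\mathrm{d}t^2+b_1^2(t)\,\mathrm{d}x^2+b_2^2(t)\,\mathrm{d}\phi^2$. Then this space-time has constant scalar curvature $\tau=\lambda$ if and only if the square lapse function has the form $$N^2(r)=-\frac{c_1}{r}+\frac{\lambda}{6}r^2+c_2$$ for suitable constants $c_1,c_2$.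
   Context: Curvature sign conventions are those of O'Neill's "Semi-Riemannian geometry" (so that, e.g., the de Sitter space has positive scalar curvature). *)

theory Defs
  imports "HOL-Analysis.Analysis"
begin

definition Cinf_on :: "real set \<Rightarrow> (real \<Rightarrow> real) \<Rightarrow> bool" where
  "Cinf_on S f \<longleftrightarrow> (\<exists>D :: nat \<Rightarrow> real \<Rightarrow> real. D 0 = f \<and>
      (\<forall>k. \<forall>x\<in>S. (D k has_real_derivative D (Suc k) x) (at x)))"

text \<open>Coordinate calculus for a metric tensor on an n-dimensional chart.
Points are maps nat => real (only coordinates 0..n-1 matter);
a metric is g p i j.\<close>

definition pd :: "nat \<Rightarrow> ((nat \<Rightarrow> real) \<Rightarrow> real) \<Rightarrow> (nat \<Rightarrow> real) \<Rightarrow> real" where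
  "pd i f p = deriv (\<lambda>s. f (p(i := s))) (p i)"

definition inv_metric ::
  "nat \<Rightarrow> ((nat \<Rightarrow> real) \<Rightarrow> nat \<Rightarrow> nat \<Rightarrow> real) \<Rightarrow> (nat \<Rightarrow> real) \<Rightarrow> nat \<Rightarrow> nat \<Rightarrow> real" where
  "inv_metric n g p = (SOME h. \<forall>i<n. \<forall>k<n.
      (\<Sum>j<n. g p i j * h j k) = (if i = k then 1 else 0))"

definition christoffel ::
  "nat \<Rightarrow> ((nat \<Rightarrow> real) \<Rightarrow> nat \<Rightarrow> nat \<Rightarrow> real) \<Rightarrow> nat \<Rightarrow> nat \<Rightarrow> nat \<Rightarrow> (nat \<Rightarrow> real) \<Rightarrow> real" where
  "christoffel n g k i j p = (\<Sum>l<n. inv_metric n g p k l *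
      (pd i (\<lambda>q. g q j l) p + pd j (\<lambda>q. g q i l) p - pd l (\<lambda>q. g q i j) p)) / 2"

text \<open>Ricci tensor R_{ij} = d_k Gamma^k_{ij} - d_j Gamma^k_{ik}
  + Gamma^k_{kl} Gamma^l_{ij} - Gamma^k_{jl} Gamma^l_{ik}
  (sign convention giving positive scalar curvature to spheres / de Sitter, as in O'Neill).\<close>
definition ricci ::
  "nat \<Rightarrow> ((nat \<Rightarrow> real) \<Rightarrow> nat \<Rightarrow> nat \<Rightarrow> real) \<Rightarrow> nat \<Rightarrow> nat \<Rightarrow> (nat \<Rightarrow> real) \<Rightarrow> real" where
  "ricci n g i j p = (\<Sum>k<n. pd k (christoffel n g k i j) p - pd j (christoffel n g k i k) p
      + (\<Sum>l<n. christoffel n g k k l p * christoffel n g l i j p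
               - christoffel n g k j l p * christoffel n g l i k p))"

definition scalar_curvature ::
  "nat \<Rightarrow> ((nat \<Rightarrow> real) \<Rightarrow> nat \<Rightarrow> nat \<Rightarrow> real) \<Rightarrow> (nat \<Rightarrow> real) \<Rightarrow> real" where
  "scalar_curvature n g p = (\<Sum>i<n. \<Sum>j<n. inv_metric n g p i j * ricci n g i j p)"

text \<open>The metric -dt^2 + b1(t)^2 dx^2 + b2(t)^2 dphi^2 in coordinates (t,x,phi) = (p 0, p 1, p 2).\<close>
definition mwp_metric ::
  "(real \<Rightarrow> real) \<Rightarrow> (real \<Rightarrow> real) \<Rightarrow> (nat \<Rightarrow> real) \<Rightarrow> nat \<Rightarrow> nat \<Rightarrow> real" where
  "mwp_metric b1 b2 q i j =
     (if i \<noteq> j then 0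
      else if i = 0 then -1
      else if i = 1 then (b1 (q 0))\<^sup>2
      else if i = 2 then (b2 (q 0))\<^sup>2
      else 0)"

end

theory Submission imports Defs "HOL-Analysis.Analysis" begin

lemma pd_lemma:
  assumes "open I" "p 0 \<in> I" "\<And>q. q 0 \<in> I \<Longrightarrow> f q = \<phi> (q 0)"
    and "(\<phi> has_real_derivative \<phi>') (at (p 0))"
  shows "pd i f p = (if i = 0 then \<phi>' else 0)"
proof (cases "i = 0")
  case True
  have "((\<lambda>s. f (p(i := s))) has_real_derivative \<phi>') (at (p i))"
    using has_field_derivative_transform_within_open[OF assms(4) assms(1) assms(2)] assms(3) True
    by force
  then show ?thesis unfolding pd_def using True DERIV_imp_deriv by simp
next
  case False
  have "(\<lambda>s. f (p(i := s))) = (\<lambda>s. \<phi> (p 0))" using False assms(2,3) by auto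
  then show ?thesis unfolding pd_def using False by simp
qed

lemma three_cases: "(k::nat) < 3 \<longleftrightarrow> k = 0 \<or> k = 1 \<or> k = 2" by auto

lemma sum3: "(\<Sum>k<(3::nat). f k) = f 0 + f 1 + (f 2 :: real)"
  by (simp add: numeral_3_eq_3 numeral_2_eq_2)

context
  fixes ba bb da db dda ddb :: "real \<Rightarrow> real" and I :: "real set"
  assumes I: "open I"
   and nz: "\<And>t. t \<in> I \<Longrightarrow> ba t \<noteq> 0 \<and> bb t \<noteq> 0"
   and D1: "\<And>t. t \<in> I \<Longrightarrow> (ba has_real_derivative da t) (at t)"
   and D2: "\<And>t. t \<in> I \<Longrightarrow> (bb has_real_derivative db t) (at t)"
   and DD1: "\<And>t. t \<in> I \<Longrightarrow> (da has_real_derivative dda t) (at t)"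
   and DD2: "\<And>t. t \<in> I \<Longrightarrow> (db has_real_derivative ddb t) (at t)"
begin

definition hinv :: "real \<Rightarrow> nat \<Rightarrow> nat \<Rightarrow> real" where
  "hinv t j k = (if j \<noteq> k then 0 else if j = 0 then -1 else if j = 1 then 1 / (ba t)\<^sup>2
     else if j = 2 then 1 / (bb t)\<^sup>2 else 0)"

lemma inv_eq:
  assumes "q 0 \<in> I" "j < 3" "k < 3"
  shows "inv_metric 3 (mwp_metric ba bb) q j k = hinv (q 0) j k"
proof -
  let ?P = "\<lambda>h. \<forall>i<3. \<forall>k<3. (\<Sum>j<3. mwp_metric ba bb q i j * h j k) = (if i = k then 1 else 0)"
  have ex: "?P (hinv (q 0))" using nz[OF assms(1)]
    by (auto simp: sum3 three_cases mwp_metric_def hinv_def power2_eq_square)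
  have "?P (inv_metric 3 (mwp_metric ba bb) q)"
    unfolding inv_metric_def by (rule someI[of ?P], rule ex)
  then have "(\<Sum>jj<3. mwp_metric ba bb q j jj * inv_metric 3 (mwp_metric ba bb) q jj k) = (if j = k then 1 else 0)"
    using assms by blast
  then show ?thesis using nz[OF assms(1)] assms(2,3)
    by (auto simp: sum3 three_cases mwp_metric_def hinv_def field_simps)
qed

definition dE :: "nat \<Rightarrow> nat \<Rightarrow> real \<Rightarrow> real" where
  "dE j l t = (if j \<noteq> l then 0 else if j = 1 then 2 * ba t * da t
     else if j = 2 then 2 * bb t * db t else 0)"

lemma pdE:
  assumes "q 0 \<in> I"
  shows "pd i (\<lambda>q. mwp_metric ba bb q j l) q = (if i = 0 then dE j l (q 0) else 0)"
proof (rule pd_lemma[where I=I and p=q and \<phi> = "\<lambda>t. mwp_metric ba bb (\<lambda>_. t) j l"])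
  show "((\<lambda>t. mwp_metric ba bb (\<lambda>_. t) j l) has_real_derivative dE j l (q 0)) (at (q 0))"
    using D1[OF assms] D2[OF assms]
    unfolding mwp_metric_def dE_def
    by (cases "j = l"; cases "l = 0"; cases "l = 1"; cases "l = 2"; auto intro!: derivative_eq_intros)
qed (simp_all add: mwp_metric_def I assms)

definition Chr :: "nat \<Rightarrow> nat \<Rightarrow> nat \<Rightarrow> real \<Rightarrow> real" where
  "Chr k i j = (if k = 0 \<and> i = 1 \<and> j = 1 then (\<lambda>t. ba t * da t)
     else if k = 0 \<and> i = 2 \<and> j = 2 then (\<lambda>t. bb t * db t)
     else if k = 1 \<and> ((i = 0 \<and> j = 1) \<or> (i = 1 \<and> j = 0)) then (\<lambda>t. da t / ba t)
     else if k = 2 \<and> ((i = 0 \<and> j = 2) \<or> (i = 2 \<and> j = 0)) then (\<lambda>t. db t / bb t)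
     else (\<lambda>t. 0))"

definition dChr :: "nat \<Rightarrow> nat \<Rightarrow> nat \<Rightarrow> real \<Rightarrow> real" where
  "dChr k i j = (if k = 0 \<and> i = 1 \<and> j = 1 then (\<lambda>t. da t * da t + ba t * dda t)
     else if k = 0 \<and> i = 2 \<and> j = 2 then (\<lambda>t. db t * db t + bb t * ddb t)
     else if k = 1 \<and> ((i = 0 \<and> j = 1) \<or> (i = 1 \<and> j = 0)) then (\<lambda>t. (dda t * ba t - da t * da t) / (ba t)\<^sup>2)
     else if k = 2 \<and> ((i = 0 \<and> j = 2) \<or> (i = 2 \<and> j = 0)) then (\<lambda>t. (ddb t * bb t - db t * db t) / (bb t)\<^sup>2)
     else (\<lambda>t. 0))"

lemma Chr_deriv:
  assumes "t \<in> I"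
  shows "(Chr k i j has_real_derivative dChr k i j t) (at t)"
  using D1[OF assms] D2[OF assms] DD1[OF assms] DD2[OF assms] nz[OF assms]
  unfolding Chr_def dChr_def
  by (auto intro!: derivative_eq_intros simp: field_simps power2_eq_square)

lemma chr_eq:
  assumes "q 0 \<in> I" "k < 3" "i < 3" "j < 3"
  shows "christoffel 3 (mwp_metric ba bb) k i j q = Chr k i j (q 0)"
  using assms nz[OF assms(1)]
  unfolding christoffel_def
  by (auto simp: sum3 three_cases pdE inv_eq Chr_def hinv_def dE_def field_simps power2_eq_square)

lemma pd_chr:
  assumes "p 0 \<in> I" "k < 3" "i < 3" "j < 3"
  shows "pd m (christoffel 3 (mwp_metric ba bb) k i j) p = (if m = 0 then dChr k i j (p 0) else 0)"
  by (rule pd_lemma[where I=I and \<phi> = "Chr k i j"]) (use assms chr_eq Chr_deriv I in auto)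

definition Ric :: "nat \<Rightarrow> nat \<Rightarrow> real \<Rightarrow> real" where
  "Ric i j t = (\<Sum>k<3. (if k = 0 then dChr k i j t else 0) - (if j = 0 then dChr k i k t else 0)
      + (\<Sum>l<3. Chr k k l t * Chr l i j t - Chr k j l t * Chr l i k t))"

lemma ricci_eq:
  assumes "p 0 \<in> I" "i < 3" "j < 3"
  shows "ricci 3 (mwp_metric ba bb) i j p = Ric i j (p 0)"
  unfolding ricci_def Ric_def
  by (intro sum.cong refl) (use assms in \<open>simp add: pd_chr chr_eq\<close>)

lemma scal_eq:
  assumes "p 0 \<in> I"
  shows "scalar_curvature 3 (mwp_metric ba bb) p =
    2 * (dda (p 0) / ba (p 0) + ddb (p 0) / bb (p 0) + da (p 0) * db (p 0) / (ba (p 0) * bb (p 0)))"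
proof -
  have "scalar_curvature 3 (mwp_metric ba bb) p = (\<Sum>i<3. \<Sum>j<3. hinv (p 0) i j * Ric i j (p 0))"
    unfolding scalar_curvature_def
    by (intro sum.cong refl) (use assms in \<open>simp add: inv_eq ricci_eq\<close>)
  also have "\<dots> = 2 * (dda (p 0) / ba (p 0) + ddb (p 0) / bb (p 0) + da (p 0) * db (p 0) / (ba (p 0) * bb (p 0)))"
    using nz[OF assms]
    by (simp add: sum3 hinv_def Ric_def Chr_def dChr_def field_simps power2_eq_square)
  finally show ?thesis .
qed

end

lemma F_deriv:
  fixes N F :: "real \<Rightarrow> real" and J :: "real set"
  assumes J: "open J" "is_interval J" and a: "a \<in> J" and r: "r \<in> J"
    and cont: "continuous_on J (\<lambda>\<mu>. 1 / N \<mu>)"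
    and Fd: "\<forall>r\<in>J. F r = (if a \<le> r then integral {a..r} (\<lambda>\<mu>. 1 / N \<mu>)
                                  else - integral {r..a} (\<lambda>\<mu>. 1 / N \<mu>))"
  shows "(F has_real_derivative 1 / N r) (at r)"
proof -
  obtain ea where ea: "ea > 0" "ball a ea \<subseteq> J" using J(1) a open_contains_ball by blast
  obtain er where er: "er > 0" "ball r er \<subseteq> J" using J(1) r open_contains_ball by blast
  define c where "c = min (a - ea/2) (r - er/2)"
  define d where "d = max (a + ea/2) (r + er/2)"
  have cJ: "c \<in> J" unfolding c_def using ea er by (auto simp: min_def dist_real_def subset_eq)
  have dJ: "d \<in> J" unfolding d_def using ea er by (auto simp: max_def dist_real_def subset_eq)
  have cdJ: "{c..d} \<subseteq> J" using J(2) cJ dJ by (meson is_interval_1 atLeastAtMost_iff subsetI)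
  have ac: "c < a" "a < d" "c < r" "r < d" unfolding c_def d_def using ea er by auto
  have contcd: "continuous_on {c..d} (\<lambda>\<mu>. 1 / N \<mu>)" using cont cdJ continuous_on_subset by blast
  have int: "(\<lambda>\<mu>. 1 / N \<mu>) integrable_on {c..d}" using contcd integrable_continuous_interval by blast
  define H where "H x = integral {c..x} (\<lambda>\<mu>. 1 / N \<mu>)" for x
  have HF: "F x = H x - H a" if "x \<in> {c<..<d}" for x
  proof -
    have xJ: "x \<in> J" using that cdJ by auto
    show ?thesis
    proof (cases "a \<le> x")
      case True
      have "integral {c..a} (\<lambda>\<mu>. 1 / N \<mu>) + integral {a..x} (\<lambda>\<mu>. 1 / N \<mu>) = H x"
        unfolding H_def
        using Henstock_Kurzweil_Integration.integral_combine[where a=c and c=a and b=x and f="\<lambda>\<mu>. 1 / N \<mu>"] ac True that integrable_on_subinterval[OF int] by auto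
      then show ?thesis using Fd xJ True unfolding H_def by auto
    next
      case False
      have "integral {c..x} (\<lambda>\<mu>. 1 / N \<mu>) + integral {x..a} (\<lambda>\<mu>. 1 / N \<mu>) = H a"
        unfolding H_def
        using Henstock_Kurzweil_Integration.integral_combine[where a=c and c=x and b=a and f="\<lambda>\<mu>. 1 / N \<mu>"] ac False that integrable_on_subinterval[OF int] by auto
      then show ?thesis using Fd xJ False unfolding H_def by auto
    qed
  qed
  have "(H has_real_derivative 1 / N r) (at r within {c..d})"
    unfolding H_def by (rule integral_has_real_derivative[OF contcd]) (use ac in auto)
  then have "(H has_real_derivative 1 / N r) (at r)"
    using at_within_interior[of r "{c..d}"] ac by auto
  then have "((\<lambda>x. H x - H a) has_real_derivative 1 / N r) (at r)"
    by (auto intro!: derivative_eq_intros)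
  then show ?thesis
    by (rule has_field_derivative_transform_within_open[where S="{c<..<d}"]) (use ac HF in auto)
qed

lemma ode_equiv:
  fixes N N1 N2 :: "real \<Rightarrow> real" and J :: "real set"
  assumes J: "open J" "is_interval J" "J \<subseteq> {0<..}"
    and d1: "\<And>r. r \<in> J \<Longrightarrow> (N has_real_derivative N1 r) (at r)"
    and d2: "\<And>r. r \<in> J \<Longrightarrow> (N1 has_real_derivative N2 r) (at r)"
  shows "(\<forall>r\<in>J. 2 * (N2 r * N r + N1 r * N1 r) + 4 * N1 r * N r / r = lam)
     \<longleftrightarrow> (\<exists>c1 c2. \<forall>r\<in>J. (N r)\<^sup>2 = - c1 / r + lam / 6 * r\<^sup>2 + c2)"
proof
  assume H: "\<forall>r\<in>J. 2 * (N2 r * N r + N1 r * N1 r) + 4 * N1 r * N r / r = lam"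
  have cvx: "convex J" using J(2) is_interval_convex by blast
  have "\<exists>c. \<forall>r\<in>J. r^2 * (2 * N r * N1 r) - lam * r^3 / 3 = c"
  proof (rule has_field_derivative_zero_constant[OF cvx])
    fix r assume r: "r \<in> J"
    have rp: "r > 0" using r J(3) by auto
    have "((\<lambda>r. r^2 * (2 * N r * N1 r) - lam * r^3 / 3) has_real_derivative
       2 * r * (2 * N r * N1 r) + r^2 * (2 * (N1 r * N1 r + N r * N2 r)) - lam * r^2) (at r)"
      using d1[OF r] d2[OF r] by (auto intro!: derivative_eq_intros simp: algebra_simps power2_eq_square power3_eq_cube)
    moreover have "2 * r * (2 * N r * N1 r) + r^2 * (2 * (N1 r * N1 r + N r * N2 r)) - lam * r^2 = 0"
    proof -
      have "lam = 2 * (N2 r * N r + N1 r * N1 r) + 4 * N1 r * N r / r" using H r by auto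
      then have h: "lam * r = 2 * (N2 r * N r + N1 r * N1 r) * r + 4 * N1 r * N r" using rp by (simp add: field_simps)
      then show ?thesis by (simp add: power2_eq_square) algebra
    qed
    ultimately show "((\<lambda>r. r^2 * (2 * N r * N1 r) - lam * r^3 / 3) has_real_derivative 0) (at r within J)"
      by (metis has_field_derivative_at_within)
  qed
  then obtain c1 where c1: "\<And>r. r \<in> J \<Longrightarrow> r^2 * (2 * N r * N1 r) - lam * r^3 / 3 = c1" by blast
  have "\<exists>c. \<forall>r\<in>J. (N r)\<^sup>2 + c1 / r - lam / 6 * r\<^sup>2 = c"
  proof (rule has_field_derivative_zero_constant[OF cvx])
    fix r assume r: "r \<in> J"
    have rp: "r > 0" using r J(3) by auto
    have "((\<lambda>r. (N r)\<^sup>2 + c1 / r - lam / 6 * r\<^sup>2) has_real_derivative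
       2 * N r * N1 r - c1 / r^2 - lam / 3 * r) (at r)"
      using d1[OF r] rp by (auto intro!: derivative_eq_intros simp: field_simps power2_eq_square)
    moreover have "2 * N r * N1 r - c1 / r^2 - lam / 3 * r = 0"
      using c1[OF r] rp by (simp add: field_simps power2_eq_square power3_eq_cube)
    ultimately show "((\<lambda>r. (N r)\<^sup>2 + c1 / r - lam / 6 * r\<^sup>2) has_real_derivative 0) (at r within J)"
      by (metis has_field_derivative_at_within)
  qed
  then obtain c2 where "\<And>r. r \<in> J \<Longrightarrow> (N r)\<^sup>2 + c1 / r - lam / 6 * r\<^sup>2 = c2" by blast
  then have "\<forall>r\<in>J. (N r)\<^sup>2 = - c1 / r + lam / 6 * r\<^sup>2 + c2" by (auto simp: algebra_simps)
  then show "\<exists>c1 c2. \<forall>r\<in>J. (N r)\<^sup>2 = - c1 / r + lam / 6 * r\<^sup>2 + c2" by blast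
next
  assume "\<exists>c1 c2. \<forall>r\<in>J. (N r)\<^sup>2 = - c1 / r + lam / 6 * r\<^sup>2 + c2"
  then obtain c1 c2 where E: "\<And>r. r \<in> J \<Longrightarrow> (N r)\<^sup>2 = - c1 / r + lam / 6 * r\<^sup>2 + c2" by blast
  show "\<forall>r\<in>J. 2 * (N2 r * N r + N1 r * N1 r) + 4 * N1 r * N r / r = lam"
  proof
    fix r assume r: "r \<in> J"
    have rp: "r > 0" using r J(3) by auto
    have e1: "2 * N s * N1 s = c1 / s^2 + lam / 3 * s" if s: "s \<in> J" for s
    proof -
      have sp: "s > 0" using s J(3) by auto
      have A: "((\<lambda>r. (N r)\<^sup>2) has_real_derivative 2 * N s * N1 s) (at s)"
        using d1[OF s] by (auto intro!: derivative_eq_intros)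
      have "((\<lambda>r. - c1 / r + lam / 6 * r\<^sup>2 + c2) has_real_derivative c1 / s^2 + lam / 3 * s) (at s)"
        using sp by (auto intro!: derivative_eq_intros simp: field_simps power2_eq_square)
      then have B: "((\<lambda>r. (N r)\<^sup>2) has_real_derivative c1 / s^2 + lam / 3 * s) (at s)"
        by (rule has_field_derivative_transform_within_open[where S=J]) (use J s E in auto)
      show ?thesis using DERIV_unique[OF A B] .
    qed
    have A: "((\<lambda>r. 2 * N r * N1 r) has_real_derivative 2 * (N1 r * N1 r + N r * N2 r)) (at r)"
      using d1[OF r] d2[OF r] by (auto intro!: derivative_eq_intros simp: algebra_simps)
    have "((\<lambda>s. c1 / s^2 + lam / 3 * s) has_real_derivative - 2 * c1 / r^3 + lam / 3) (at r)"
      using rp by (auto intro!: derivative_eq_intros simp: field_simps power2_eq_square power3_eq_cube)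
    then have B: "((\<lambda>r. 2 * N r * N1 r) has_real_derivative - 2 * c1 / r^3 + lam / 3) (at r)"
      by (rule has_field_derivative_transform_within_open[where S=J]) (use J r e1 in auto)
    have X: "2 * (N1 r * N1 r + N r * N2 r) = - 2 * c1 / r^3 + lam / 3" using DERIV_unique[OF A B] .
    have Y: "2 * N r * N1 r = c1 / r^2 + lam / 3 * r" using e1[OF r] .
    have "2 * (N2 r * N r + N1 r * N1 r) + 4 * N1 r * N r / r
        = 2 * (N1 r * N1 r + N r * N2 r) + 2 * (2 * N r * N1 r) / r" by (simp add: algebra_simps)
    also have "\<dots> = lam" unfolding X Y using rp by (simp add: field_simps power2_eq_square power3_eq_cube)
    finally show "2 * (N2 r * N r + N1 r * N1 r) + 4 * N1 r * N r / r = lam" .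
  qed
qed

theorem proposition6p3:
  fixes N F G :: "real \<Rightarrow> real" and J I :: "real set" and a lam :: real
  assumes "open J" and "is_interval J" and "J \<noteq> {}" and "J \<subseteq> {0<..}"
    and "Cinf_on J N" and "\<forall>r\<in>J. N r > 0"
    and "a \<in> J"
    and "\<forall>r\<in>J. F r = (if a \<le> r then integral {a..r} (\<lambda>\<mu>. 1 / N \<mu>)
                                  else - integral {r..a} (\<lambda>\<mu>. 1 / N \<mu>))"
    and "I = F ` J"
    and "Cinf_on I G" and "\<forall>r\<in>J. G (F r) = r" and "\<forall>t\<in>I. F (G t) = t"
  shows "(\<forall>p :: nat \<Rightarrow> real. p 0 \<in> I \<longrightarrow>
            scalar_curvature 3 (mwp_metric (\<lambda>t. N (G t)) G) p = lam)
         \<longleftrightarrow> (\<exists>c1 c2. \<forall>r\<in>J. (N r)\<^sup>2 = - c1 / r + lam / 6 * r\<^sup>2 + c2)"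
proof -
  note J = assms(1,2,4)
  obtain DN where DN0: "DN 0 = N" and dN: "\<And>k x. x \<in> J \<Longrightarrow> (DN k has_real_derivative DN (Suc k) x) (at x)"
    using assms(5) unfolding Cinf_on_def by blast
  obtain DG where DG0: "DG 0 = G" and dGk: "\<And>k x. x \<in> I \<Longrightarrow> (DG k has_real_derivative DG (Suc k) x) (at x)"
    using assms(10) unfolding Cinf_on_def by blast
  have dN1: "(N has_real_derivative DN 1 r) (at r)" if "r \<in> J" for r
    using dN[OF that, of 0] DN0 by simp
  have dN2: "(DN 1 has_real_derivative DN 2 r) (at r)" if "r \<in> J" for r
    using dN[OF that, of 1] by (simp add: numeral_2_eq_2)
  have Npos: "\<And>r. r \<in> J \<Longrightarrow> N r > 0" using assms(6) by blast
  have contN: "continuous_on J N"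
    using dN1 DERIV_isCont continuous_at_imp_continuous_on by blast
  have contiN: "continuous_on J (\<lambda>\<mu>. 1 / N \<mu>)"
    using contN Npos by (intro continuous_intros) (auto, metis less_irrefl)
  have dF: "(F has_real_derivative 1 / N r) (at r)" if "r \<in> J" for r
    by (rule F_deriv[OF assms(1,2,7) that contiN assms(8)])
  have contF: "continuous_on J F"
    using dF DERIV_isCont continuous_at_imp_continuous_on by blast
  have injF: "inj_on F J" using assms(11) by (metis inj_onI)
  have openI: "open I" unfolding assms(9) by (rule invariance_of_domain[OF contF assms(1) injF])
  have GJ: "G t \<in> J" if "t \<in> I" for t using that assms(9,11) by auto
  have dG: "(G has_real_derivative N (G t)) (at t)" if t: "t \<in> I" for t
  proof -
    have g1: "(G has_real_derivative DG 1 t) (at t)" using dGk[OF t, of 0] DG0 by simp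
    have "((\<lambda>x. F (G x)) has_real_derivative 1 / N (G t) * DG 1 t) (at t)"
      using DERIV_chain2[OF dF[OF GJ[OF t]] g1] .
    moreover have "((\<lambda>x. F (G x)) has_real_derivative 1) (at t)"
    proof (rule has_field_derivative_transform_within_open[where S=I and f="\<lambda>x. x"])
      show "((\<lambda>x. x) has_real_derivative 1) (at t)" by (rule DERIV_ident)
    qed (use openI t assms(12) in auto)
    ultimately have "1 / N (G t) * DG 1 t = 1" by (rule DERIV_unique)
    then have "DG 1 t = N (G t)" using Npos[OF GJ[OF t]] by (simp add: field_simps)
    then show ?thesis using g1 by simp
  qed
  have nzI: "\<And>t. t \<in> I \<Longrightarrow> N (G t) \<noteq> 0 \<and> G t \<noteq> 0"
    using GJ Npos J(3) by force
  have D1: "\<And>t. t \<in> I \<Longrightarrow> ((\<lambda>t. N (G t)) has_real_derivative DN 1 (G t) * N (G t)) (at t)"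
    using DERIV_chain2[OF dN1[OF GJ] dG] by blast
  have D2: "\<And>t. t \<in> I \<Longrightarrow> (G has_real_derivative N (G t)) (at t)" using dG by blast
  have E2: "\<And>t. t \<in> I \<Longrightarrow> ((\<lambda>t. DN 1 (G t)) has_real_derivative DN 2 (G t) * N (G t)) (at t)"
    using DERIV_chain2[OF dN2[OF GJ] dG] by blast
  have DD1: "\<And>t. t \<in> I \<Longrightarrow> ((\<lambda>t. DN 1 (G t) * N (G t)) has_real_derivative
      (DN 2 (G t) * N (G t) + DN 1 (G t) * DN 1 (G t)) * N (G t)) (at t)"
  proof -
    fix t assume t: "t \<in> I"
    show "?thesis t"
      by (rule DERIV_cong[OF DERIV_mult[OF E2[OF t] D1[OF t]]]) (simp add: algebra_simps)
  qed
  have S: "scalar_curvature 3 (mwp_metric (\<lambda>t. N (G t)) G) p =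
      2 * (DN 2 (G (p 0)) * N (G (p 0)) + DN 1 (G (p 0)) * DN 1 (G (p 0)))
      + 4 * DN 1 (G (p 0)) * N (G (p 0)) / G (p 0)" if p: "p 0 \<in> I" for p
  proof -
    have "scalar_curvature 3 (mwp_metric (\<lambda>t. N (G t)) G) p =
      2 * ((DN 2 (G (p 0)) * N (G (p 0)) + DN 1 (G (p 0)) * DN 1 (G (p 0))) * N (G (p 0)) / N (G (p 0))
        + DN 1 (G (p 0)) * N (G (p 0)) / G (p 0)
        + DN 1 (G (p 0)) * N (G (p 0)) * N (G (p 0)) / (N (G (p 0)) * G (p 0)))"
      by (rule scal_eq[where ba="\<lambda>t. N (G t)" and bb=G and da="\<lambda>t. DN 1 (G t) * N (G t)"
           and db="\<lambda>t. N (G t)" and dda="\<lambda>t. (DN 2 (G t) * N (G t) + DN 1 (G t) * DN 1 (G t)) * N (G t)"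
           and ddb="\<lambda>t. DN 1 (G t) * N (G t)" and I=I]) (use openI nzI D1 D2 DD1 p in auto)
    also have "\<dots> = 2 * (DN 2 (G (p 0)) * N (G (p 0)) + DN 1 (G (p 0)) * DN 1 (G (p 0)))
      + 4 * DN 1 (G (p 0)) * N (G (p 0)) / G (p 0)"
      using nzI[OF p] by (simp add: field_simps)
    finally show ?thesis .
  qed
  have "(\<forall>p :: nat \<Rightarrow> real. p 0 \<in> I \<longrightarrow>
            scalar_curvature 3 (mwp_metric (\<lambda>t. N (G t)) G) p = lam)
      \<longleftrightarrow> (\<forall>r\<in>J. 2 * (DN 2 r * N r + DN 1 r * DN 1 r) + 4 * DN 1 r * N r / r = lam)"
  proof
    assume L: "\<forall>p :: nat \<Rightarrow> real. p 0 \<in> I \<longrightarrow> scalar_curvature 3 (mwp_metric (\<lambda>t. N (G t)) G) p = lam"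
    show "\<forall>r\<in>J. 2 * (DN 2 r * N r + DN 1 r * DN 1 r) + 4 * DN 1 r * N r / r = lam"
    proof
      fix r assume r: "r \<in> J"
      have p: "(\<lambda>_::nat. F r) 0 \<in> I" using r assms(9) by simp
      show "2 * (DN 2 r * N r + DN 1 r * DN 1 r) + 4 * DN 1 r * N r / r = lam"
        using L[rule_format, OF p] S[OF p] assms(11) r by simp
    qed
  next
    assume R: "\<forall>r\<in>J. 2 * (DN 2 r * N r + DN 1 r * DN 1 r) + 4 * DN 1 r * N r / r = lam"
    show "\<forall>p :: nat \<Rightarrow> real. p 0 \<in> I \<longrightarrow> scalar_curvature 3 (mwp_metric (\<lambda>t. N (G t)) G) p = lam"
      using R S GJ by auto
  qed
  also have "\<dots> \<longleftrightarrow> (\<exists>c1 c2. \<forall>r\<in>J. (N r)\<^sup>2 = - c1 / r + lam / 6 * r\<^sup>2 + c2)"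
    by (rule ode_equiv[OF J dN1 dN2])
  finally show ?thesis .
qed

end
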